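(* Let $D\subset\Phi^+$ be an orthogonal subset satisfying Assumption (A). (a) Let $\beta\in D\cap\mathcal C_j$, $\alpha\in S^+(\beta)$, and suppose $\beta-\alpha\in\mathcal M_j$. Then every $\beta'\in D$ of the form $\beta'=\alpha+\delta$ with $\delta\in\Phi^+$ lies in $\mathcal C_j$. (b) Suppose $|D\cap\mathcal C_j|=2$, say $D\cap\mathcal C_j=\{\beta,\beta'\}$, let $\gamma\in\mathcal M_j$ with $\mathrm{col}(\gamma)\ne\pm\mathrm{row}(\beta)$. Then every root of $D$ of the form $\gamma+\delta$ with $\delta\in\mathcal P$ lies in $\mathcal C_j$.
   Context: Let $\Phi$ be a root system of type $B_n$, $C_n$ or $D_n$ in $\mathbb R^n$ with standard basis $\varepsilon_1,\dots,\varepsilon_n$ and positive roots $\Phi^+=\{\varepsilon_i\pm\varepsilon_j:1\le i<j\le n\}\cup\Phi_1^+$, where $\Phi_1^+=\emptyset$ for $D_n$, $\{\varepsilon_i\}$ for $B_n$, $\{2\varepsilon_i\}$ for $C_n$. $D\subset\Phi^+$ is orthogonal if its roots are pairwise orthogonal. Assumption (A): if $\Phi=B_n$, $D$ contains at most one root of the form $\varepsilon_i$; if $\Phi=C_n$, $D$ does not contain both $\varepsilon_i-\varepsilon_j$ and $\varepsilon_i+\varepsilon_j$ for any $i<j$. $\mathrm{col}(\varepsilon_i\pm\varepsilon_j)=\mathrm{col}(\varepsilon_i)=\mathrm{col}(2\varepsilon_i)=i$; $\mathrm{row}(\varepsilon_i\pm\varepsilon_j)=\mp j$, $\mathrm{row}(\varepsilon_i)=0$,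 $\mathrm{row}(2\varepsilon_i)=-i$. $\mathcal R_i=\{\alpha\in\Phi^+:\mathrm{row}(\alpha)=i\}$, $\mathcal C_j=\{\alpha\in\Phi^+:\mathrm{col}(\alpha)=j\}$. For $\beta\in\Phi^+$, $S(\beta)=\{\alpha\in\Phi^+:\beta-\alpha\in\Phi^+\}$; $S^+(\beta)=\{\varepsilon_i+\varepsilon_l:i<l\le n\}$ if $\Phi=C_n$ and $\beta=2\varepsilon_i$, and $S^+(\beta)=S(\beta)\cap\mathcal C_{\mathrm{col}(\beta)}$ otherwise; $S^-(\beta)=S(\beta)\setminus S^+(\beta)$. Let $j_1<\dots<j_t$ be the indices of columns containing roots of $D$; recursively $\mathcal M_{j_i}=\{\gamma\in S^-(\beta):\beta\in D\cap\mathcal C_{j_i},\ \gamma\notin\bigcup_{l<i}\mathcal M_{j_l},\ \beta-\gamma\notin\bigcup_{l<i}\mathcal M_{j_l}\}$, and $\mathcal M_j=\emptyset$ for columns $j$ containing no root of $D$; $\mathcal M=\bigcup_i\mathcal M_{j_i}$, $\mathcal P=\Phi^+\setminus\mathcal M$. *)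

theory Defs
  imports Main "HOL-Library.Function_Algebras"
begin

datatype rtype = TB | TC | TD

text \<open>Positive roots, by shape:
  RPlus i j = eps_i + eps_j, RMinus i j = eps_i - eps_j (intended i < j),
  RShort i = eps_i (type B), RLong i = 2 eps_i (type C).\<close>
datatype root = RPlus nat nat | RMinus nat nat | RShort nat | RLong nat

definition unitv :: "nat \<Rightarrow> nat \<Rightarrow> int" where
  "unitv i = (\<lambda>k. if k = i then 1 else 0)"

fun vec :: "root \<Rightarrow> nat \<Rightarrow> int" where
  "vec (RPlus i j) = unitv i + unitv j"
| "vec (RMinus i j) = unitv i - unitv j"
| "vec (RShort i) = unitv i"
| "vec (RLong i) = 2 * unitv i"

definition pos_roots :: "rtype \<Rightarrow> nat \<Rightarrow> root set" where
  "pos_roots t n =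
     {RPlus i j | i j. 1 \<le> i \<and> i < j \<and> j \<le> n}
   \<union> {RMinus i j | i j. 1 \<le> i \<and> i < j \<and> j \<le> n}
   \<union> (case t of TD \<Rightarrow> {}
        | TB \<Rightarrow> {RShort i | i. 1 \<le> i \<and> i \<le> n}
        | TC \<Rightarrow> {RLong i | i. 1 \<le> i \<and> i \<le> n})"

fun col :: "root \<Rightarrow> nat" where
  "col (RPlus i j) = i"
| "col (RMinus i j) = i"
| "col (RShort i) = i"
| "col (RLong i) = i"

fun row :: "root \<Rightarrow> int" where
  "row (RPlus i j) = - int j"
| "row (RMinus i j) = int j"
| "row (RShort i) = 0"
| "row (RLong i) = - int i"

definition inner :: "nat \<Rightarrow> root \<Rightarrow> root \<Rightarrow> int" where
  "inner n a b = (\<Sum>k\<in>{1..n}. vec a k * vec b k)"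

definition orthogonal_set :: "rtype \<Rightarrow> nat \<Rightarrow> root set \<Rightarrow> bool" where
  "orthogonal_set t n D \<longleftrightarrow> D \<subseteq> pos_roots t n \<and>
     (\<forall>a\<in>D. \<forall>b\<in>D. a \<noteq> b \<longrightarrow> inner n a b = 0)"

definition assumptionA :: "rtype \<Rightarrow> root set \<Rightarrow> bool" where
  "assumptionA t D \<longleftrightarrow>
     (t = TB \<longrightarrow> (\<forall>i k. RShort i \<in> D \<and> RShort k \<in> D \<longrightarrow> i = k)) \<and>
     (t = TC \<longrightarrow> (\<forall>i j. i < j \<longrightarrow> \<not> (RMinus i j \<in> D \<and> RPlus i j \<in> D)))"

definition Rows :: "rtype \<Rightarrow> nat \<Rightarrow> int \<Rightarrow> root set" where
  "Rows t n i = {a \<in> pos_roots t n. row a = i}"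

definition Cols :: "rtype \<Rightarrow> nat \<Rightarrow> nat \<Rightarrow> root set" where
  "Cols t n j = {a \<in> pos_roots t n. col a = j}"

definition S :: "rtype \<Rightarrow> nat \<Rightarrow> root \<Rightarrow> root set" where
  "S t n b = {a \<in> pos_roots t n. \<exists>g \<in> pos_roots t n. vec g = vec b - vec a}"

definition Splus :: "rtype \<Rightarrow> nat \<Rightarrow> root \<Rightarrow> root set" where
  "Splus t n b =
     (if t = TC \<and> b = RLong (col b)
      then {RPlus (col b) l | l. col b < l \<and> l \<le> n}
      else S t n b \<inter> Cols t n (col b))"

definition Sminus :: "rtype \<Rightarrow> nat \<Rightarrow> root \<Rightarrow> root set" where
  "Sminus t n b = S t n b - Splus t n b"

text \<open>The step of the recursion defining M_j, given the union prev of all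
  earlier M_l (l < j). Empty if column j contains no root of D.\<close>
definition Mstep :: "rtype \<Rightarrow> nat \<Rightarrow> root set \<Rightarrow> nat \<Rightarrow> root set \<Rightarrow> root set" where
  "Mstep t n D j prev =
     {g. \<exists>b \<in> D \<inter> Cols t n j. g \<in> Sminus t n b \<and> g \<notin> prev \<and>
         (\<forall>d \<in> pos_roots t n. vec d = vec b - vec g \<longrightarrow> d \<notin> prev)}"

primrec Mbefore :: "rtype \<Rightarrow> nat \<Rightarrow> root set \<Rightarrow> nat \<Rightarrow> root set" where
  "Mbefore t n D 0 = {}"
| "Mbefore t n D (Suc j) = Mbefore t n D j \<union> Mstep t n D j (Mbefore t n D j)"

definition Mcol :: "rtype \<Rightarrow> nat \<Rightarrow> root set \<Rightarrow> nat \<Rightarrow> root set" where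
  "Mcol t n D j = Mstep t n D j (Mbefore t n D j)"

definition Mset :: "rtype \<Rightarrow> nat \<Rightarrow> root set \<Rightarrow> root set" where
  "Mset t n D = Mbefore t n D (Suc n)"

definition Pset :: "rtype \<Rightarrow> nat \<Rightarrow> root set \<Rightarrow> root set" where
  "Pset t n D = pos_roots t n - Mset t n D"

end

theory Submission
  imports Defs
begin
lemma pos_RPlus[simp]: "RPlus i j \<in> pos_roots t n \<longleftrightarrow> 1 \<le> i \<and> i < j \<and> j \<le> n"
  by (cases t) (auto simp: pos_roots_def)
lemma pos_RMinus[simp]: "RMinus i j \<in> pos_roots t n \<longleftrightarrow> 1 \<le> i \<and> i < j \<and> j \<le> n"
  by (cases t) (auto simp: pos_roots_def)
lemma pos_RShort[simp]: "RShort i \<in> pos_roots t n \<longleftrightarrow> t = TB \<and> 1 \<le> i \<and> i \<le> n"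
  by (cases t) (auto simp: pos_roots_def)
lemma pos_RLong[simp]: "RLong i \<in> pos_roots t n \<longleftrightarrow> t = TC \<and> 1 \<le> i \<and> i \<le> n"
  by (cases t) (auto simp: pos_roots_def)

fun idx :: "root \<Rightarrow> nat set" where
  "idx (RPlus i j) = {i,j}" | "idx (RMinus i j) = {i,j}" | "idx (RShort i) = {i}" | "idx (RLong i) = {i}"

lemma vec_app[simp]:
  "vec (RPlus i j) k = unitv i k + unitv j k" "vec (RMinus i j) k = unitv i k - unitv j k"
  "vec (RShort i) k = unitv i k" "vec (RLong i) k = 2 * unitv i k"
  by (simp_all add: plus_fun_def fun_diff_def times_fun_def)

lemma vec_out: "k \<notin> idx r \<Longrightarrow> vec r k = 0"
  by (cases r) (auto simp: unitv_def)

lemma rs_iff: "(vec x = vec y + vec z) \<longleftrightarrow> (\<forall>q \<in> idx x \<union> idx y \<union> idx z. vec x q = vec y q + vec z q)"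
proof
  assume h: "\<forall>q \<in> idx x \<union> idx y \<union> idx z. vec x q = vec y q + vec z q"
  show "vec x = vec y + vec z"
  proof
    fix q show "vec x q = (vec y + vec z) q"
      using h vec_out[of q x] vec_out[of q y] vec_out[of q z] by (cases "q \<in> idx x \<union> idx y \<union> idx z") auto
  qed
qed auto

lemma veq_iff: "(vec x = vec y) \<longleftrightarrow> (\<forall>q \<in> idx x \<union> idx y. vec x q = vec y q)"
proof
  assume h: "\<forall>q \<in> idx x \<union> idx y. vec x q = vec y q"
  show "vec x = vec y"
  proof
    fix q show "vec x q = vec y q"
      using h vec_out[of q x] vec_out[of q y] by (cases "q \<in> idx x \<union> idx y") auto
  qed
qed auto

lemma vec_inj: "x \<in> pos_roots t n \<Longrightarrow> y \<in> pos_roots t n \<Longrightarrow> vec x = vec y \<Longrightarrow> x = y"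
  by (cases x; cases y) (auto simp del: vec.simps simp add: veq_iff unitv_def split: if_splits)

definition pm :: "root \<Rightarrow> root \<Rightarrow> root \<Rightarrow> bool" where
 "pm x p q \<longleftrightarrow>
 (\<exists>i m k. i<m \<and> m<k \<and> x = RMinus i k \<and> p = RMinus i m \<and> q = RMinus m k) \<or>
 (\<exists>i m k. i<m \<and> m<k \<and> x = RPlus i k \<and> p = RMinus i m \<and> q = RPlus m k) \<or>
 (\<exists>i k m. i<k \<and> k<m \<and> x = RPlus i k \<and> p = RMinus i m \<and> q = RPlus k m) \<or>
 (\<exists>i k m. i<k \<and> k<m \<and> x = RPlus i k \<and> p = RPlus i m \<and> q = RMinus k m) \<or>
 (\<exists>i k. i<k \<and> x = RPlus i k \<and> p = RShort i \<and> q = RShort k) \<or>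
 (\<exists>i m. i<m \<and> x = RShort i \<and> p = RMinus i m \<and> q = RShort m) \<or>
 (\<exists>i m. i<m \<and> x = RLong i \<and> p = RPlus i m \<and> q = RMinus i m) \<or>
 (\<exists>i k. i<k \<and> x = RPlus i k \<and> p = RMinus i k \<and> q = RLong k)"

lemma pm_rs: "pm x p q \<Longrightarrow> vec x = vec p + vec q"
  unfolding pm_def by (auto simp del: vec.simps simp add: rs_iff unitv_def)

lemma rs_pm: "x \<in> pos_roots t n \<Longrightarrow> y \<in> pos_roots t n \<Longrightarrow> z \<in> pos_roots t n \<Longrightarrow>
   vec x = vec y + vec z \<Longrightarrow> pm x y z \<or> pm x z y"
  apply (cases x; cases y; cases z)
  apply (simp_all del: vec.simps add: rs_iff unitv_def pm_def split: if_splits)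
  done


lemma S_iff: "a \<in> S t n b \<longleftrightarrow> a \<in> pos_roots t n \<and> (\<exists>g\<in>pos_roots t n. vec b = vec a + vec g)"
proof -
  have "\<And>g. (vec g = vec b - vec a) = (vec b = vec a + vec g)"
    by (metis add_diff_cancel_left' diff_add_cancel)
  then show ?thesis unfolding S_def by auto
qed

lemma pm_col: "pm x p q \<Longrightarrow> col p = col x \<and> col x \<le> col q"
  unfolding pm_def by auto

lemma pm_Splus: "pm x p q \<Longrightarrow> x \<in> pos_roots t n \<Longrightarrow> p \<in> pos_roots t n \<Longrightarrow> q \<in> pos_roots t n \<Longrightarrow>
   p \<in> Splus t n x \<and> q \<in> Sminus t n x"
proof -
  assume h: "pm x p q" "x \<in> pos_roots t n" "p \<in> pos_roots t n" "q \<in> pos_roots t n"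
  have rs: "vec x = vec p + vec q" using pm_rs[OF h(1)] .
  have pS: "p \<in> S t n x" using rs h unfolding S_iff by auto
  have qS: "q \<in> S t n x" using rs h unfolding S_iff by (auto simp: add.commute)
  show ?thesis using h(1) pS qS h(2-)
    unfolding Sminus_def Splus_def Cols_def pm_def by auto
qed

lemma Sminus_pm: assumes "q \<in> Sminus t n x" "x \<in> pos_roots t n"
  obtains p where "p \<in> pos_roots t n" "pm x p q"
proof -
  from assms(1) have q: "q \<in> pos_roots t n" and "\<exists>g\<in>pos_roots t n. vec x = vec q + vec g" and nq: "q \<notin> Splus t n x"
    unfolding Sminus_def by (auto simp: S_iff)
  then obtain g where g: "g \<in> pos_roots t n" "vec x = vec q + vec g" by auto
  from rs_pm[OF assms(2) q g(1) g(2)] have "pm x q g \<or> pm x g q" .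
  moreover have "\<not> pm x q g" using pm_Splus[OF _ assms(2) q g(1)] nq by blast
  ultimately show ?thesis using that g by blast
qed

lemma Splus_pm: assumes "p \<in> Splus t n x" "x \<in> pos_roots t n"
  obtains q where "q \<in> pos_roots t n" "pm x p q"
proof (cases "t = TC \<and> x = RLong (col x)")
  case True
  then obtain l where "p = RPlus (col x) l" "col x < l" "l \<le> n" using assms(1) unfolding Splus_def by auto
  moreover have "1 \<le> col x" using assms(2) True by (cases x) auto
  ultimately show ?thesis using that[of "RMinus (col x) l"] True unfolding pm_def by auto
next
  case False
  then have p: "p \<in> S t n x" "col p = col x" using assms(1) unfolding Splus_def Cols_def by auto
  then have pp: "p \<in> pos_roots t n" and "\<exists>g\<in>pos_roots t n. vec x = vec p + vec g" unfolding S_iff by auto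
  then obtain g where g: "g \<in> pos_roots t n" "vec x = vec p + vec g" by auto
  from rs_pm[OF assms(2) pp g(1) g(2)] have "pm x p g \<or> pm x g p" .
  moreover have "\<not> pm x g p" using pm_Splus[OF _ assms(2) g(1) pp] assms(1) unfolding Sminus_def by blast
  ultimately show ?thesis using that g by blast
qed

lemma pos_col: "x \<in> pos_roots t n \<Longrightarrow> 1 \<le> col x \<and> col x \<le> n"
  by (cases x) auto

lemma finite_idx[simp]: "finite (idx x)" by (cases x) auto

lemma inner_idx: assumes "idx x \<subseteq> {1..n}"
  shows "inner n x y = (\<Sum>q\<in>idx x. vec x q * vec y q)"
  unfolding inner_def
  by (rule sum.mono_neutral_right) (use assms vec_out in auto)

lemma inner_shapes:
  "1 \<le> i \<Longrightarrow> i < j \<Longrightarrow> j \<le> n \<Longrightarrow> inner n (RPlus i j) y = vec y i + vec y j"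
  "1 \<le> i \<Longrightarrow> i < j \<Longrightarrow> j \<le> n \<Longrightarrow> inner n (RMinus i j) y = vec y i - vec y j"
  "1 \<le> i \<Longrightarrow> i \<le> n \<Longrightarrow> inner n (RShort i) y = vec y i"
  "1 \<le> i \<Longrightarrow> i \<le> n \<Longrightarrow> inner n (RLong i) y = 2 * vec y i"
  by (subst inner_idx; auto simp: unitv_def)+

lemma RL0: assumes "b \<in> pos_roots t n" "b' \<in> pos_roots t n" "col b = col b'" "b \<noteq> b'" "inner n b b' = 0"
  shows "\<exists>k. col b < k \<and> (b = RPlus (col b) k \<and> b' = RMinus (col b) k \<or> b = RMinus (col b) k \<and> b' = RPlus (col b) k)"
  using assms
  by (cases b; cases b') (auto simp del: vec.simps simp: inner_shapes unitv_def split: if_splits)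
lemma inner_comm: "inner n x y = inner n y x"
  unfolding inner_def by (simp add: mult.commute)

lemma vec_below: "r \<in> pos_roots t n \<Longrightarrow> k < col r \<Longrightarrow> vec r k = 0"
  by (cases r) (auto simp: unitv_def)

lemma RL4g: assumes "j < k" "b = RPlus j k \<and> b' = RMinus j k \<or> b = RMinus j k \<and> b' = RPlus j k"
  "\<beta> = b \<or> \<beta> = b'" "pm \<beta> h g" "int (col g) \<noteq> row b" "int (col g) \<noteq> - row b"
  shows "\<exists>m. j < m \<and> m < k \<and> (g = RPlus m k \<or> g = RMinus m k)"
  using assms(2,3,4,5,6,1) unfolding pm_def
  apply (elim disjE exE conjE)
  apply simp_all
  done

lemma RL4r: assumes "j < k" "b = RPlus j k \<and> b' = RMinus j k \<or> b = RMinus j k \<and> b' = RPlus j k"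
  "b \<in> pos_roots t n"  "inner n r b = 0" "inner n r b' = 0"
  shows "vec r j = 0 \<and> vec r k = 0"
proof -
  have "1 \<le> j" "k \<le> n" using assms(2,3) by auto
  then show ?thesis using assms(1,2,4,5) inner_comm[of n r b] inner_comm[of n r b'] 
    by (auto simp del: vec.simps simp: inner_shapes)
qed

lemma RL4d: assumes "j < m" "m < k" "g = RPlus m k \<or> g = RMinus m k"
  "r \<in> pos_roots t n" "j < col r" "vec r j = 0" "vec r k = 0" "pm r g d \<or> pm r d g"
  shows "(\<exists>x. j<x \<and> x<k \<and> d = RMinus x k \<and> vec r x \<ge> 1) \<or>
         (\<exists>x. j<x \<and> x<k \<and> d = RPlus x k \<and> vec r x \<ge> 1) \<or>
         (\<exists>x. k<x \<and> d = RPlus k x \<and> vec r x \<ge> 1) \<or>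
         (\<exists>x. k<x \<and> d = RMinus k x \<and> vec r x \<le> -1) \<or>
         (d = RShort k \<and> r = RShort m)"
  using assms(8,3,1,2,4-7) unfolding pm_def
  apply (elim disjE exE conjE)
  apply (simp_all del: vec.simps add: unitv_def split: if_splits)
  done

lemma RL4a': assumes "(\<exists>x. j<x \<and> x<k \<and> d = RMinus x k \<and> vec r x \<ge> 1) \<or>
         (\<exists>x. j<x \<and> x<k \<and> d = RPlus x k \<and> vec r x \<ge> 1) \<or>
         (\<exists>x. k<x \<and> d = RPlus k x \<and> vec r x \<ge> 1) \<or>
         (\<exists>x. k<x \<and> d = RMinus k x \<and> vec r x \<le> -1) \<or>
         (d = RShort k \<and> r = RShort m)" "j < k"
  shows "(\<exists>h'. pm (RPlus j k) h' d) \<or> (\<exists>h'. pm (RMinus j k) h' d)"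
  using assms(1)
proof (elim disjE exE conjE)
  fix x assume "j < x" "x < k" "d = RMinus x k"
  then have "pm (RMinus j k) (RMinus j x) d" by (simp add: pm_def)
  then show ?thesis by blast
next
  fix x assume "j < x" "x < k" "d = RPlus x k"
  then have "pm (RPlus j k) (RMinus j x) d" by (simp add: pm_def)
  then show ?thesis by blast
next
  fix x assume "k < x" "d = RPlus k x"
  then have "pm (RPlus j k) (RMinus j x) d" using assms(2) by (simp add: pm_def)
  then show ?thesis by blast
next
  fix x assume "k < x" "d = RMinus k x"
  then have "pm (RPlus j k) (RPlus j x) d" using assms(2) by (simp add: pm_def)
  then show ?thesis by blast
next
  assume "d = RShort k"
  then have "pm (RPlus j k) (RShort j) d" using assms(2) by (simp add: pm_def)
  then show ?thesis by blast
qed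

lemma RL4h: assumes "(\<exists>x. j<x \<and> x<k \<and> d = RMinus x k \<and> vec r x \<ge> 1) \<or>
         (\<exists>x. j<x \<and> x<k \<and> d = RPlus x k \<and> vec r x \<ge> 1) \<or>
         (\<exists>x. k<x \<and> d = RPlus k x \<and> vec r x \<ge> 1) \<or>
         (\<exists>x. k<x \<and> d = RMinus k x \<and> vec r x \<le> -1) \<or>
         (d = RShort k \<and> r = RShort m)" "j < k"
   "\<beta>' = RPlus j k \<or> \<beta>' = RMinus j k" "pm \<beta>' h' d"
  shows "(\<exists>x. j<x \<and> h' = RMinus j x \<and> vec r x \<ge> 1) \<or> (\<exists>x. j<x \<and> h' = RPlus j x \<and> vec r x \<le> -1)
     \<or> (h' = RShort j \<and> (\<exists>m. r = RShort m))"
  using assms(1,3,4,2) unfolding pm_def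
  apply (elim disjE exE conjE)
  apply (simp_all del: vec.simps)
  done

lemma RL4fin: assumes "(\<exists>x. j<x \<and> h' = RMinus j x \<and> vec r x \<ge> 1) \<or> (\<exists>x. j<x \<and> h' = RPlus j x \<and> vec r x \<le> -1)
     \<or> (h' = RShort j \<and> (\<exists>m. r = RShort m))"
   "pm b4 y h'" "b4 \<in> pos_roots t n" "col b4 < j" "vec b4 j = 0" "inner n b4 r = 0"
   "r \<in> pos_roots t n" "j < col r" "\<not>(\<exists>i k. r = RShort i \<and> b4 = RShort k)"
  shows False
proof -
  have vb: "\<And>q. q < col r \<Longrightarrow> vec r q = 0" using vec_below[OF assms(7)] by blast
  show ?thesis using assms(1,2,3,4,5,6,8,9) vb unfolding pm_def
  apply (elim disjE exE conjE)
  apply (simp_all del: vec.simps add: inner_shapes unitv_def)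
  done
qed

lemma RL3: assumes "b \<in> pos_roots t n" "b' \<in> pos_roots t n" "b3 \<in> pos_roots t n"
  "pm b a c" "pm b' d a" "pm b3 f d" "col b3 < col b'" "col b' < col b"
  "inner n b b' = 0" "inner n b b3 = 0" "inner n b' b3 = 0"
  shows False
  using assms unfolding pm_def
  apply (elim disjE exE conjE)
  apply (simp_all del: vec.simps add: inner_shapes unitv_def split: if_splits)
  done

lemma RL0j: assumes "b \<in> pos_roots t n" "b' \<in> pos_roots t n" "col b = j" "col b' = j" "b \<noteq> b'" "inner n b b' = 0"
  shows "\<exists>k. j < k \<and> (b = RPlus j k \<and> b' = RMinus j k \<or> b = RMinus j k \<and> b' = RPlus j k)"
  using assms
  by (cases b; cases b') (auto simp del: vec.simps simp: inner_shapes unitv_def split: if_splits)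

lemma RL1: assumes "j < k" "b = RPlus j k \<and> b'' = RMinus j k \<or> b = RMinus j k \<and> b'' = RPlus j k"
  "pm b a c" "pm b'' c' c" shows False
  using assms(2,3,4,1) unfolding pm_def
  apply (elim disjE exE conjE)
  apply simp_all
  done

lemma pm_pos1: "pm x p q \<Longrightarrow> x \<in> pos_roots t n \<Longrightarrow> q \<in> pos_roots t n \<Longrightarrow> p \<in> pos_roots t n"
  unfolding pm_def by auto

lemma Splus_pos: "a \<in> Splus t n b \<Longrightarrow> b \<in> pos_roots t n \<Longrightarrow> a \<in> pos_roots t n"
  unfolding Splus_def S_iff Cols_def by (cases b) (auto split: if_splits)

lemma Sminus_pos: "a \<in> Sminus t n b \<Longrightarrow> a \<in> pos_roots t n"
  unfolding Sminus_def by (auto simp: S_iff)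

lemma diff_conv: "(vec x = vec y - vec z) = (vec y = vec z + vec x)"
  by (metis add_diff_cancel_left' diff_add_cancel)

lemma Mbefore_iff: "x \<in> Mbefore t n D j \<longleftrightarrow> (\<exists>l<j. x \<in> Mcol t n D l)"
  by (induction j) (auto simp: Mcol_def less_Suc_eq)

lemma Mcol_E: "x \<in> Mcol t n D j \<Longrightarrow> \<exists>b \<in> D \<inter> Cols t n j. x \<in> Sminus t n b \<and> x \<notin> Mbefore t n D j \<and>
   (\<forall>d\<in>pos_roots t n. vec d = vec b - vec x \<longrightarrow> d \<notin> Mbefore t n D j)"
  unfolding Mcol_def Mstep_def by auto

lemma Mcol_I: "b \<in> D \<Longrightarrow> b \<in> Cols t n j \<Longrightarrow> x \<in> Sminus t n b \<Longrightarrow> x \<notin> Mbefore t n D j \<Longrightarrow>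
   (\<forall>d\<in>pos_roots t n. vec d = vec b - vec x \<longrightarrow> d \<notin> Mbefore t n D j) \<Longrightarrow> x \<in> Mcol t n D j"
  unfolding Mcol_def Mstep_def by auto

lemma Mcol_Mset: "x \<in> Mcol t n D l \<Longrightarrow> l \<le> n \<Longrightarrow> x \<in> Mset t n D"
  unfolding Mset_def Mbefore_iff using le_imp_less_Suc by blast

lemma Mbefore_Mset: "x \<in> Mbefore t n D l \<Longrightarrow> l \<le> Suc n \<Longrightarrow> x \<in> Mset t n D"
  unfolding Mset_def Mbefore_iff using less_le_trans by blast

lemma Cols_iff: "b \<in> Cols t n j \<longleftrightarrow> b \<in> pos_roots t n \<and> col b = j"
  unfolding Cols_def by auto


theorem lemma2p7:
  fixes t :: rtype and n :: nat and D :: "root set"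
  assumes orth: "orthogonal_set t n D"
    and A: "assumptionA t D"
  shows
   "(\<forall>j b a. b \<in> D \<inter> Cols t n j \<longrightarrow> a \<in> Splus t n b \<longrightarrow>
       (\<exists>c \<in> Mcol t n D j. vec c = vec b - vec a) \<longrightarrow>
       (\<forall>b' \<in> D. \<forall>d \<in> pos_roots t n. vec b' = vec a + vec d \<longrightarrow> b' \<in> Cols t n j))
  \<and> (\<forall>j b b' g. D \<inter> Cols t n j = {b, b'} \<longrightarrow> b \<noteq> b' \<longrightarrow>
       g \<in> Mcol t n D j \<longrightarrow> int (col g) \<noteq> row b \<longrightarrow> int (col g) \<noteq> - row b \<longrightarrow>
       (\<forall>r \<in> D. \<forall>d \<in> Pset t n D. vec r = vec g + vec d \<longrightarrow> r \<in> Cols t n j))"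
proof -
  have Dpos: "\<And>x. x \<in> D \<Longrightarrow> x \<in> pos_roots t n" using orth unfolding orthogonal_set_def by auto
  have inn: "\<And>x y. x\<in>D \<Longrightarrow> y\<in>D \<Longrightarrow> col x \<noteq> col y \<Longrightarrow> inner n x y = 0"
    using orth unfolding orthogonal_set_def by auto
  show ?thesis
  proof (intro conjI allI impI ballI)
    fix j b a b' d
    assume bD: "b \<in> D \<inter> Cols t n j" and aS: "a \<in> Splus t n b"
      and exc: "\<exists>c\<in>Mcol t n D j. vec c = vec b - vec a" and b'D: "b' \<in> D"
      and dpos: "d \<in> pos_roots t n" and e: "vec b' = vec a + vec d"
    have bpos: "b \<in> pos_roots t n" "col b = j" "b \<in> D" using bD by (auto simp: Cols_iff)
    have b'pos: "b' \<in> pos_roots t n" using Dpos b'D by auto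
    have apos: "a \<in> pos_roots t n" using Splus_pos aS bpos by blast
    obtain c where c: "c \<in> Mcol t n D j" "vec c = vec b - vec a" using exc by blast
    obtain b'' where b'': "b'' \<in> D \<inter> Cols t n j" "c \<in> Sminus t n b''" "c \<notin> Mbefore t n D j"
      and part'': "\<forall>e\<in>pos_roots t n. vec e = vec b'' - vec c \<longrightarrow> e \<notin> Mbefore t n D j"
      using Mcol_E[OF c(1)] by blast
    have cpos: "c \<in> pos_roots t n" using Sminus_pos b''(2) by blast
    obtain q where q: "q \<in> pos_roots t n" "pm b a q" using Splus_pm[OF aS bpos(1)] by blast
    have "vec q = vec c" using pm_rs[OF q(2)] c(2) by simp
    then have "q = c" using vec_inj q(1) cpos by blast
    then have pmc: "pm b a c" using q by simp
    have b''pos: "b'' \<in> pos_roots t n" "col b'' = j" "b'' \<in> D" using b''(1) by (auto simp: Cols_iff)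
    obtain c' where c': "c' \<in> pos_roots t n" "pm b'' c' c" using Sminus_pm[OF b''(2) b''pos(1)] by blast
    have "b'' = b"
    proof (rule ccontr)
      assume ne: "b'' \<noteq> b"
      have "inner n b b'' = 0" using orth bpos(3) b''pos(3) ne unfolding orthogonal_set_def by auto
      then obtain k where k: "j < k" "b = RPlus j k \<and> b'' = RMinus j k \<or> b = RMinus j k \<and> b'' = RPlus j k"
        using RL0j[OF bpos(1) b''pos(1) bpos(2) b''pos(2) ne[symmetric]] by blast
      from RL1[OF k pmc c'(2)] show False .
    qed
    have ca: "col a = j" using pm_col[OF pmc] bpos(2) by simp
    have "vec a = vec b'' - vec c" using pm_rs[OF pmc] \<open>b'' = b\<close> by simp
    then have anb: "a \<notin> Mbefore t n D j"
      using part'' apos by blast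
    show "b' \<in> Cols t n j"
    proof (rule ccontr)
      assume nc: "b' \<notin> Cols t n j"
      then have ncol: "col b' \<noteq> j" using b'pos by (auto simp: Cols_iff)
      have "pm b' a d \<or> pm b' d a" using rs_pm[OF b'pos apos dpos e] .
      moreover have "\<not> pm b' a d" using pm_col[of b' a d] ca ncol by auto
      ultimately have pda: "pm b' d a" by blast
      define i where "i = col b'"
      have ij: "i < j" using pm_col[OF pda] ca ncol i_def by auto
      have aSm: "a \<in> Sminus t n b'" using pm_Splus[OF pda b'pos dpos apos] by blast
      have "a \<notin> Mcol t n D i" using anb ij by (auto simp: Mbefore_iff)
      moreover have "a \<notin> Mbefore t n D i" using anb ij by (auto simp: Mbefore_iff)
      moreover have "b' \<in> Cols t n i" using b'pos i_def by (auto simp: Cols_iff)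
      ultimately obtain e where e1: "e \<in> pos_roots t n" "vec e = vec b' - vec a" "e \<in> Mbefore t n D i"
        using Mcol_I[OF b'D _ aSm] by blast
      have "vec e = vec d" using e1(2) pm_rs[OF pda] by simp
      then have "e = d" using vec_inj e1(1) dpos by blast
      then obtain l where l: "l < i" "d \<in> Mcol t n D l" using e1(3) by (auto simp: Mbefore_iff)
      obtain b3 where b3: "b3 \<in> D \<inter> Cols t n l" "d \<in> Sminus t n b3" using Mcol_E[OF l(2)] by blast
      have b3pos: "b3 \<in> pos_roots t n" "col b3 = l" "b3 \<in> D" using b3(1) by (auto simp: Cols_iff)
      obtain f where f: "f \<in> pos_roots t n" "pm b3 f d" using Sminus_pm[OF b3(2) b3pos(1)] by blast
      show False
        using RL3[OF bpos(1) b'pos b3pos(1) pmc pda f(2)] l(1) ij i_def b3pos bpos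
          inn[OF bpos(3) b'D] inn[OF bpos(3) b3pos(3)] inn[OF b'D b3pos(3)] by auto
    qed
  next
    fix j b b' g r d
    assume Dj: "D \<inter> Cols t n j = {b, b'}" and bb': "b \<noteq> b'" and gM: "g \<in> Mcol t n D j"
      and rb1: "int (col g) \<noteq> row b" and rb2: "int (col g) \<noteq> - row b"
      and rD: "r \<in> D" and dP: "d \<in> Pset t n D" and e: "vec r = vec g + vec d"
    have bDC: "b \<in> D \<inter> Cols t n j" "b' \<in> D \<inter> Cols t n j" using Dj by simp_all
    have bpos: "b \<in> pos_roots t n" "col b = j" "b \<in> D" using bDC(1) by (simp_all add: Cols_iff)
    have b'pos: "b' \<in> pos_roots t n" "col b' = j" "b' \<in> D" using bDC(2) by (simp_all add: Cols_iff)
    have jn: "j \<le> n" using pos_col[OF bpos(1)] bpos(2) by simp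
    obtain \<beta> where \<beta>: "\<beta> \<in> D \<inter> Cols t n j" "g \<in> Sminus t n \<beta>" "g \<notin> Mbefore t n D j"
      using Mcol_E[OF gM] by blast
    have \<beta>bb: "\<beta> = b \<or> \<beta> = b'" using \<beta>(1) Dj by simp
    have \<beta>pos: "\<beta> \<in> pos_roots t n" using \<beta>(1) by (auto simp: Cols_iff)
    obtain h where h: "h \<in> pos_roots t n" "pm \<beta> h g" using Sminus_pm[OF \<beta>(2) \<beta>pos] by blast
    have gpos: "g \<in> pos_roots t n" using Sminus_pos \<beta>(2) by blast
    have dpos: "d \<in> pos_roots t n" and dM: "d \<notin> Mset t n D" using dP unfolding Pset_def by auto
    have rpos: "r \<in> pos_roots t n" using Dpos rD by blast
    have rsr: "pm r g d \<or> pm r d g" using rs_pm[OF rpos gpos dpos e] .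
    show "r \<in> Cols t n j"
    proof (rule ccontr)
      assume "r \<notin> Cols t n j"
      then have ncol: "col r \<noteq> j" using rpos by (auto simp: Cols_iff)
      define p where "p = col r"
      have pn: "p \<le> n" using pos_col[OF rpos] p_def by simp
      have rC: "r \<in> Cols t n p" using rpos p_def by (auto simp: Cols_iff)
      show False
      proof (cases "p < j")
        case True
        have Mpj: "\<And>x. x \<in> Mbefore t n D p \<Longrightarrow> x \<in> Mbefore t n D j" using True unfolding Mbefore_iff by (meson order.strict_trans)
        have Mpj': "\<And>x. x \<in> Mcol t n D p \<Longrightarrow> x \<in> Mbefore t n D j" using True by (auto simp: Mbefore_iff)
        from rsr show False
        proof
          assume pgd: "pm r g d"
          have dSm: "d \<in> Sminus t n r" using pm_Splus[OF pgd rpos gpos dpos] by blast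
          have "d \<notin> Mcol t n D p" using dM Mcol_Mset pn by blast
          moreover have "d \<notin> Mbefore t n D p" using dM Mbefore_Mset pn by auto
          ultimately obtain e where e1: "e \<in> pos_roots t n" "vec e = vec r - vec d" "e \<in> Mbefore t n D p"
            using Mcol_I[OF rD rC dSm] by blast
          have "vec e = vec g" using e1(2) e by simp
          then have "e = g" using vec_inj e1(1) gpos by blast
          then show False using e1(3) Mpj \<beta>(3) by blast
        next
          assume pdg: "pm r d g"
          have gSm: "g \<in> Sminus t n r" using pm_Splus[OF pdg rpos dpos gpos] by blast
          have "g \<notin> Mcol t n D p" using Mpj' \<beta>(3) by blast
          moreover have "g \<notin> Mbefore t n D p" using Mpj \<beta>(3) by blast
          ultimately obtain e where e1: "e \<in> pos_roots t n" "vec e = vec r - vec g" "e \<in> Mbefore t n D p"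
            using Mcol_I[OF rD rC gSm] by blast
          have "vec e = vec d" using e1(2) e by simp
          then have "e = d" using vec_inj e1(1) dpos by blast
          then show False using e1(3) dM Mbefore_Mset pn by auto
        qed
      next
        case False
        then have jp: "j < p" using ncol p_def by simp
        have i1: "inner n b b' = 0" using orth bpos(3) b'pos(3) bb' unfolding orthogonal_set_def by auto
        have i2: "inner n r b = 0" using inn[OF rD bpos(3)] jp p_def bpos(2) by simp
        have i3: "inner n r b' = 0" using inn[OF rD b'pos(3)] jp p_def b'pos(2) by simp
        obtain k where kj: "j < k" "b = RPlus j k \<and> b' = RMinus j k \<or> b = RMinus j k \<and> b' = RPlus j k"
          using RL0j[OF bpos(1) b'pos(1) bpos(2) b'pos(2) bb' i1] by blast
        obtain m where m: "j < m" "m < k" "g = RPlus m k \<or> g = RMinus m k"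
          using RL4g[OF kj \<beta>bb h(2) rb1 rb2] by blast
        have r0: "vec r j = 0" "vec r k = 0" using RL4r[OF kj bpos(1) i2 i3] by auto
        have dd: "(\<exists>x. j<x \<and> x<k \<and> d = RMinus x k \<and> vec r x \<ge> 1) \<or>
         (\<exists>x. j<x \<and> x<k \<and> d = RPlus x k \<and> vec r x \<ge> 1) \<or>
         (\<exists>x. k<x \<and> d = RPlus k x \<and> vec r x \<ge> 1) \<or>
         (\<exists>x. k<x \<and> d = RMinus k x \<and> vec r x \<le> -1) \<or>
         (d = RShort k \<and> r = RShort m)"
          using RL4d[OF m rpos _ r0 rsr] jp p_def by blast
        obtain \<beta>' h' where bh: "\<beta>' = RPlus j k \<or> \<beta>' = RMinus j k" "pm \<beta>' h' d"
          using RL4a'[OF dd kj(1)] by blast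
        have \<beta>'D: "\<beta>' \<in> D" "\<beta>' \<in> Cols t n j" using bh(1) kj(2) bDC by auto
        have \<beta>'pos: "\<beta>' \<in> pos_roots t n" using \<beta>'D by (auto simp: Cols_iff)
        have h'pos: "h' \<in> pos_roots t n" using pm_pos1[OF bh(2) \<beta>'pos dpos] .
        have dSm: "d \<in> Sminus t n \<beta>'" using pm_Splus[OF bh(2) \<beta>'pos h'pos dpos] by blast
        have "d \<notin> Mcol t n D j" using dM Mcol_Mset jn by blast
        moreover have "d \<notin> Mbefore t n D j" using dM Mbefore_Mset jn by auto
        ultimately obtain e where e1: "e \<in> pos_roots t n" "vec e = vec \<beta>' - vec d" "e \<in> Mbefore t n D j"
          using Mcol_I[OF \<beta>'D(1) \<beta>'D(2) dSm] by blast
        have "vec e = vec h'" using e1(2) pm_rs[OF bh(2)] by simp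
        then have "e = h'" using vec_inj e1(1) h'pos by blast
        then obtain l where l: "l < j" "h' \<in> Mcol t n D l" using e1(3) by (auto simp: Mbefore_iff)
        obtain b4 where b4: "b4 \<in> D \<inter> Cols t n l" "h' \<in> Sminus t n b4" using Mcol_E[OF l(2)] by blast
        have b4pos: "b4 \<in> pos_roots t n" "col b4 = l" "b4 \<in> D" using b4(1) by (auto simp: Cols_iff)
        obtain y where y: "y \<in> pos_roots t n" "pm b4 y h'" using Sminus_pm[OF b4(2) b4pos(1)] by blast
        have hh: "(\<exists>x. j<x \<and> h' = RMinus j x \<and> vec r x \<ge> 1) \<or> (\<exists>x. j<x \<and> h' = RPlus j x \<and> vec r x \<le> -1)
           \<or> (h' = RShort j \<and> (\<exists>m. r = RShort m))"
          using RL4h[OF dd kj(1) bh] .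
        have i4: "inner n b4 b = 0" using inn[OF b4pos(3) bpos(3)] l(1) b4pos(2) bpos(2) by simp
        have i5: "inner n b4 b' = 0" using inn[OF b4pos(3) b'pos(3)] l(1) b4pos(2) b'pos(2) by simp
        have i6: "inner n b4 r = 0" using inn[OF b4pos(3) rD] l(1) b4pos(2) jp p_def by simp
        have b40: "vec b4 j = 0" using RL4r[OF kj bpos(1) i4 i5] by auto
        have ns: "\<not>(\<exists>i k. r = RShort i \<and> b4 = RShort k)"
        proof
          assume "\<exists>i k. r = RShort i \<and> b4 = RShort k"
          then obtain i k where "r = RShort i" "b4 = RShort k" by blast
          then have "t = TB" using rpos by simp
          then have "i = k" using A rD b4pos(3) \<open>r = RShort i\<close> \<open>b4 = RShort k\<close> unfolding assumptionA_def by blast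
          then show False using \<open>r = RShort i\<close> \<open>b4 = RShort k\<close> b4pos(2) l(1) jp p_def by simp
        qed
        show False using RL4fin[OF hh y(2) b4pos(1) _ b40 i6 rpos _ ns] b4pos(2) l(1) jp p_def by simp
      qed
    qed
  qed
qed

end
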